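(* For every $\gamma>0$ there exists a density operator $\varrho$ on ${\cal H}$ with $0<\operatorname{tr}[\varrho H]<\infty$ such that $$\left\|\widetilde\varrho_{-}-\frac{{\cal N}_{-}(\gamma)[\varrho]}{\operatorname{tr}\big[{\cal N}_{-}(\gamma)[\varrho]\big]}\right\|_1\ \ge\ \tfrac12\ln(e-1),$$ and (for every $\gamma>0$) there likewise exists a density operator $\varrho$ with $\operatorname{tr}[\varrho H]<\infty$ such that $$\left\|\widetilde\varrho_{+}-\frac{{\cal N}_{+}(\gamma)[\varrho]}{\operatorname{tr}\big[{\cal N}_{+}(\gamma)[\varrho]\big]}\right\|_1\ \ge\ \tfrac12\ln(e-1).$$
   Context: ${\cal H}$ is a separable Hilbert space with orthonormal (Fock) basis $\{|n\rangle\}_{n=0}^{\infty}$; $a=\sum_{n\ge1}\sqrt{n}\,|n-1\rangle\langle n|$, $a^{\dagger}=\sum_{n\ge0}\sqrt{n+1}\,|n+1\rangle\langle n|$, $H=a^{\dagger}a$. For a density operator $\varrho$, $\operatorname{tr}[\varrho H^k]=\sum_n n^k\langle n|\varrho|n\rangle$. Ideal photon subtraction/addition outputs (defined when $\operatorname{tr}[\varrho H]<\infty$, and for subtraction also $\operatorname{tr}[\varrho H]>0$): $\widetilde\varrho_{-}=a\varrho a^{\dagger}/\operatorname{tr}[a\varrho a^{\dagger}]$, $\widetilde\varrho_{+}=a^{\dagger}\varrho a/\operatorname{tr}[a^{\dagger}\varrho a]$. For $\gamma>0$, the approximate photon subtraction and addition operations are ${\cal N}_{-}(\gamma)[\varrho]=(e^{2\gamma}-1)\,a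 e^{-\gamma H}\varrho e^{-\gamma H}a^{\dagger}$ and ${\cal N}_{+}(\gamma)[\varrho]=(e^{2\gamma}-1)\,e^{-\gamma H}a^{\dagger}\varrho a e^{-\gamma H}$. The trace norm is $\|X\|_1=\operatorname{tr}\sqrt{X^{\dagger}X}$. *)

theory Defs
  imports Complex_Main "HOL-Library.Extended_Real"
begin

text \<open>Operators on the Fock space are represented by their matrix elements
  X m n = <m|X|n> in the Fock basis.\<close>

type_synonym fmat = "nat \<Rightarrow> nat \<Rightarrow> complex"

definition psd_trunc :: "nat \<Rightarrow> fmat \<Rightarrow> bool" where
  "psd_trunc N A \<longleftrightarrow> (\<forall>x :: nat \<Rightarrow> complex.
     Im (\<Sum>i<N. \<Sum>j<N. cnj (x i) * A i j * x j) = 0 \<and>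
     0 \<le> Re (\<Sum>i<N. \<Sum>j<N. cnj (x i) * A i j * x j))"

definition density :: "fmat \<Rightarrow> bool" where
  "density \<rho> \<longleftrightarrow> (\<forall>m n. \<rho> m n = cnj (\<rho> n m)) \<and> (\<forall>N. psd_trunc N \<rho>) \<and>
     (\<lambda>n. \<rho> n n) sums 1"

text \<open>tr[rho H] = sum_n n <n|rho|n>; finiteness and value.\<close>
definition energy_finite :: "fmat \<Rightarrow> bool" where
  "energy_finite \<rho> \<longleftrightarrow> summable (\<lambda>n. real n * Re (\<rho> n n))"

definition energy :: "fmat \<Rightarrow> real" where
  "energy \<rho> = (\<Sum>n. real n * Re (\<rho> n n))"

definition mtrace :: "fmat \<Rightarrow> complex" where
  "mtrace X = (\<Sum>n. X n n)"

text \<open>a X a^dagger and a^dagger X a, entrywise.\<close>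
definition ann_conj :: "fmat \<Rightarrow> fmat" where
  "ann_conj X = (\<lambda>m n. complex_of_real (sqrt (real (Suc m)) * sqrt (real (Suc n))) * X (Suc m) (Suc n))"

definition cre_conj :: "fmat \<Rightarrow> fmat" where
  "cre_conj X = (\<lambda>m n. if m = 0 \<or> n = 0 then 0
      else complex_of_real (sqrt (real m) * sqrt (real n)) * X (m - 1) (n - 1))"

text \<open>exp(-gamma H) X exp(-gamma H).\<close>
definition damp :: "real \<Rightarrow> fmat \<Rightarrow> fmat" where
  "damp \<gamma> X = (\<lambda>m n. complex_of_real (exp (- \<gamma> * real m) * exp (- \<gamma> * real n)) * X m n)"

definition normalize_op :: "fmat \<Rightarrow> fmat" where
  "normalize_op X = (\<lambda>m n. X m n / mtrace X)"

definition rho_minus :: "fmat \<Rightarrow> fmat" where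
  "rho_minus \<rho> = normalize_op (ann_conj \<rho>)"

definition rho_plus :: "fmat \<Rightarrow> fmat" where
  "rho_plus \<rho> = normalize_op (cre_conj \<rho>)"

definition N_minus :: "real \<Rightarrow> fmat \<Rightarrow> fmat" where
  "N_minus \<gamma> \<rho> = (\<lambda>m n. complex_of_real (exp (2 * \<gamma>) - 1) * ann_conj (damp \<gamma> \<rho>) m n)"

definition N_plus :: "real \<Rightarrow> fmat \<Rightarrow> fmat" where
  "N_plus \<gamma> \<rho> = (\<lambda>m n. complex_of_real (exp (2 * \<gamma>) - 1) * damp \<gamma> (cre_conj \<rho>) m n)"

definition mdiff :: "fmat \<Rightarrow> fmat \<Rightarrow> fmat" where
  "mdiff A B = (\<lambda>m n. A m n - B m n)"

definition msqrt :: "nat \<Rightarrow> fmat \<Rightarrow> fmat" where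
  "msqrt N A = (THE S. (\<forall>i j. (N \<le> i \<or> N \<le> j) \<longrightarrow> S i j = 0) \<and> psd_trunc N S \<and>
      (\<forall>i<N. \<forall>j<N. (\<Sum>k<N. S i k * S k j) = A i j))"

definition trnorm_fin :: "nat \<Rightarrow> fmat \<Rightarrow> real" where
  "trnorm_fin N X = Re (\<Sum>i<N. msqrt N (\<lambda>i j. \<Sum>k<N. cnj (X k i) * X k j) i i)"

text \<open>||X||_1 = sup_N ||P_N X P_N||_1 (monotone in N, equals tr sqrt(X^dagger X)).\<close>
definition trace_norm :: "fmat \<Rightarrow> ereal" where
  "trace_norm X = (SUP N. ereal (trnorm_fin N X))"

end

theory Submission
  imports Defs "HOL-Real_Asymp.Real_Asymp"
begin

definition dg :: "nat \<Rightarrow> nat \<Rightarrow> fmat" where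
  "dg a b = (\<lambda>m n. if m = n \<and> (m = a \<or> m = b) then 1/2 else 0)"

lemma mtrace_two:
  assumes "a \<noteq> b" "\<And>n. X n n = (if n = a then u else if n = b then v else 0)"
  shows "mtrace X = u + v"
proof -
  have "mtrace X = (\<Sum>n\<in>{a,b}. X n n)"
    unfolding mtrace_def by (rule suminf_finite) (auto simp: assms(2))
  also have "\<dots> = u + v" using assms by simp
  finally show ?thesis .
qed

lemma dg_density:
  assumes "a \<noteq> b"
  shows "density (dg a b)"
proof -
  have herm: "\<forall>m n. dg a b m n = cnj (dg a b n m)" by (auto simp: dg_def)
  have psd: "psd_trunc N (dg a b)" for N
  proof -
    have "(\<Sum>i<N. \<Sum>j<N. cnj (x i) * dg a b i j * x j)
        = (\<Sum>i<N. complex_of_real (if i = a \<or> i = b then (cmod (x i))^2 / 2 else 0))" for x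
    proof (rule sum.cong[OF refl])
      fix i assume i: "i \<in> {..<N}"
      have "(\<Sum>j<N. cnj (x i) * dg a b i j * x j) = (\<Sum>j\<in>{i}. cnj (x i) * dg a b i j * x j)"
        by (rule sum.mono_neutral_right) (use i in \<open>auto simp: dg_def\<close>)
      also have "\<dots> = complex_of_real (if i = a \<or> i = b then (cmod (x i))^2 / 2 else 0)"
      proof -
        have "cnj (x i) * (1/2) * x i = complex_of_real ((cmod (x i))^2 / 2)"
          using complex_norm_square[of "x i"] by (simp add: field_simps)
        then show ?thesis by (auto simp: dg_def)
      qed
      finally show "(\<Sum>j<N. cnj (x i) * dg a b i j * x j) = complex_of_real (if i = a \<or> i = b then (cmod (x i))^2 / 2 else 0)" .
    qed
    then show ?thesis unfolding psd_trunc_def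
      by (simp del: of_real_sum add: of_real_sum[symmetric] sum_nonneg)
  qed
  have "(\<lambda>n. dg a b n n) sums (\<Sum>n\<in>{a,b}. 1/2)"
  proof -
    have "(\<lambda>n. dg a b n n) = (\<lambda>n. if n \<in> {a,b} then 1/2 else 0)" by (auto simp: dg_def)
    then show ?thesis using sums_If_finite_set[of "{a,b}" "\<lambda>_. 1/2 :: complex"] by simp
  qed
  then have "(\<lambda>n. dg a b n n) sums 1" using assms by simp
  then show ?thesis using herm psd unfolding density_def by blast
qed

lemma dg_energy:
  assumes "a \<noteq> b"
  shows "energy_finite (dg a b)" "energy (dg a b) = (real a + real b) / 2"
proof -
  have eq: "(\<lambda>n. real n * Re (dg a b n n)) = (\<lambda>n. if n \<in> {a,b} then real n / 2 else 0)"
    by (auto simp: dg_def)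
  have s: "(\<lambda>n. real n * Re (dg a b n n)) sums (\<Sum>n\<in>{a,b}. real n / 2)"
    unfolding eq by (rule sums_If_finite_set) simp
  then show "energy_finite (dg a b)" unfolding energy_finite_def by (rule sums_summable)
  show "energy (dg a b) = (real a + real b) / 2" unfolding energy_def using sums_unique[OF s] assms
    by (simp add: add_divide_distrib)
qed

lemma aux_nonneg: "(0::real) \<le> s \<Longrightarrow> 0 \<le> a * s * a + b * s * b"
  by (metis add_nonneg_nonneg mult.commute mult.left_commute mult_nonneg_nonneg zero_le_square)

lemma msqrt1:
  assumes "A 0 0 = complex_of_real t" "t \<ge> 0"
  shows "msqrt 1 A 0 0 = complex_of_real (sqrt t)"
proof -
  define S0 :: fmat where "S0 = (\<lambda>i j. if i = 0 \<and> j = 0 then complex_of_real (sqrt t) else 0)"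
  let ?P = "\<lambda>S. (\<forall>i j. (1 \<le> i \<or> 1 \<le> j) \<longrightarrow> S i j = 0) \<and> psd_trunc 1 S \<and>
      (\<forall>i<1. \<forall>j<1. (\<Sum>k<1. S i k * S k j) = A i j)"
  have "msqrt 1 A = S0" unfolding msqrt_def
  proof (rule the_equality)
    show "?P S0" using assms
      by (auto simp: S0_def psd_trunc_def complex_norm_square[symmetric] aux_nonneg simp flip: of_real_mult)
  next
    fix S assume P: "?P S"
    have "Im (S 0 0) = 0 \<and> 0 \<le> Re (S 0 0)"
      using P[unfolded psd_trunc_def] by (auto dest: spec[of _ "\<lambda>_. 1"])
    moreover have "S 0 0 * S 0 0 = complex_of_real t" using P assms by auto
    ultimately have "S 0 0 = complex_of_real (sqrt t)"
      by (metis (no_types, lifting) Im_complex_of_real Re_complex_of_real complex_eq_iff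
          of_real_mult real_sqrt_abs2 real_sqrt_mult_self abs_of_nonneg mult_eq_0_iff)
    then show "S = S0" using P by (auto simp: S0_def fun_eq_iff)
  qed
  then show ?thesis by (simp add: S0_def)
qed

lemma msqrt2:
  assumes "A 0 0 = 0" "A 0 1 = 0" "A 1 0 = 0" "A 1 1 = complex_of_real t" "t \<ge> 0"
  shows "msqrt 2 A 0 0 = 0" "msqrt 2 A 1 1 = complex_of_real (sqrt t)"
proof -
  define S0 :: fmat where "S0 = (\<lambda>i j. if i = 1 \<and> j = 1 then complex_of_real (sqrt t) else 0)"
  let ?P = "\<lambda>S. (\<forall>i j. (2 \<le> i \<or> 2 \<le> j) \<longrightarrow> S i j = 0) \<and> psd_trunc 2 S \<and>
      (\<forall>i<2. \<forall>j<2. (\<Sum>k<2. S i k * S k j) = A i j)"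
  have two: "{..<2::nat} = {0,1}" by auto
  have "msqrt 2 A = S0" unfolding msqrt_def
  proof (rule the_equality)
    have "psd_trunc 2 S0" using assms(5)
      by (auto simp: S0_def psd_trunc_def two complex_norm_square[symmetric] aux_nonneg simp flip: of_real_mult)
    moreover have "\<forall>i<2. \<forall>j<2. (\<Sum>k<2. S0 i k * S0 k j) = A i j"
      using assms by (auto simp: S0_def two less_2_cases_iff simp flip: of_real_mult)
    ultimately show "?P S0" by (auto simp: S0_def)
  next
    fix S assume P: "?P S"
    have Q: "\<And>x. Im (\<Sum>i<2. \<Sum>j<2. cnj (x i) * S i j * x j) = 0 \<and>
       0 \<le> Re (\<Sum>i<2. \<Sum>j<2. cnj (x i) * S i j * x j)"
      using P unfolding psd_trunc_def by blast
    have q1: "Im (S 0 0) = 0" "Re (S 0 0) \<ge> 0"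
      using Q[of "\<lambda>i. if i = 0 then 1 else 0"] by (auto simp: two)
    have q2: "Im (S 1 1) = 0" "Re (S 1 1) \<ge> 0"
      using Q[of "\<lambda>i. if i = 0 then 0 else 1"] by (auto simp: two)
    have q3: "Im (S 0 1) + Im (S 1 0) = 0"
      using Q[of "\<lambda>i. 1"] q1 q2 by (auto simp: two)
    have q4: "Re (S 0 1) = Re (S 1 0)"
      using Q[of "\<lambda>i. if i = 0 then 1 else \<i>"] q1 q2 by (auto simp: two)
    have e00: "S 0 0 * S 0 0 + S 0 1 * S 1 0 = 0" using P assms by (auto simp: two)
    have e11: "S 1 0 * S 0 1 + S 1 1 * S 1 1 = complex_of_real t" using P assms by (auto simp: two)
    have "Re (S 0 0) ^ 2 + Re (S 0 1) ^ 2 + Im (S 0 1) ^ 2 = 0"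
    proof -
      have q3': "Im (S 1 0) = - Im (S 0 1)" using q3 by simp
      show ?thesis using arg_cong[OF e00, of Re] q1 q3' q4 by (simp add: power2_eq_square)
    qed
    then have "Re (S 0 0) ^ 2 = 0 \<and> Re (S 0 1) ^ 2 = 0 \<and> Im (S 0 1) ^ 2 = 0"
      by (smt (verit) zero_le_power2)
    then have z: "Re (S 0 0) = 0" "Re (S 0 1) = 0" "Im (S 0 1) = 0" by simp_all
    then have z2: "S 0 0 = 0" "S 0 1 = 0" "S 1 0 = 0" using q1 q3 q4 by (auto simp: complex_eq_iff)
    then have "S 1 1 * S 1 1 = complex_of_real t" using e11 by simp
    then have "Re (S 1 1) * Re (S 1 1) = t" using q2 by (simp add: complex_eq_iff)
    then have "Re (S 1 1) = sqrt t" using q2 by (metis real_sqrt_mult_self abs_of_nonneg real_sqrt_abs2)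
    then have "S 1 1 = complex_of_real (sqrt t)" using q2 by (simp add: complex_eq_iff)
    then show "S = S0" using P z2 unfolding S0_def fun_eq_iff
      by (metis (no_types, lifting) One_nat_def less_2_cases_iff not_less)
  qed
  then show "msqrt 2 A 0 0 = 0" "msqrt 2 A 1 1 = complex_of_real (sqrt t)" by (simp_all add: S0_def)
qed

lemma trnorm1:
  "trace_norm X \<ge> ereal (cmod (X 0 0))"
proof -
  have "trnorm_fin 1 X = cmod (X 0 0)"
  proof -
    have "(\<lambda>i j. \<Sum>k<1. cnj (X k i) * X k j) 0 0 = complex_of_real ((cmod (X 0 0))^2)"
      using complex_norm_square[of "X 0 0"] by (simp add: mult.commute)
    from msqrt1[of "\<lambda>i j. \<Sum>k<1. cnj (X k i) * X k j", OF this zero_le_power2] show ?thesis by (simp add: trnorm_fin_def)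
  qed
  then show ?thesis unfolding trace_norm_def by (metis SUP_upper UNIV_I)
qed

lemma trnorm2:
  assumes "X 0 0 = 0" "X 0 1 = 0" "X 1 0 = 0"
  shows "trace_norm X \<ge> ereal (cmod (X 1 1))"
proof -
  have two: "{..<2::nat} = {0,1}" by auto
  let ?A = "\<lambda>i j. \<Sum>k<2. cnj (X k i) * X k j"
  have "?A 0 0 = 0" "?A 0 1 = 0" "?A 1 0 = 0" "?A 1 1 = complex_of_real ((cmod (X 1 1))^2)"
    using assms complex_norm_square[of "X 1 1"] by (simp_all add: two mult.commute)
  from msqrt2[of ?A, OF this zero_le_power2] have "trnorm_fin 2 X = cmod (X 1 1)" by (simp add: trnorm_fin_def two)
  then show ?thesis unfolding trace_norm_def by (metis SUP_upper UNIV_I)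
qed

lemma bound_const: "ln (exp 1 - 1) / 2 \<le> (1/2 :: real)"
proof -
  have "exp 1 - 1 > (0::real)" by simp
  then have "ln (exp 1 - 1) \<le> exp 1 - 1 - (1::real)" using ln_le_minus_one[of "exp 1 - 1"] by linarith
  with exp_le show ?thesis by simp
qed

lemma real_ineq:
  fixes c E1 Ek k :: real
  assumes "c > 0" "E1 > 0" "Ek \<ge> 0" "k \<ge> 9" "k * Ek \<le> E1 / 4"
  shows "1/2 \<le> (c * (E1 / 2)) / (c * (E1 / 2) + c * (k * Ek / 2)) - (1/2) / (1/2 + k/2)"
proof -
  have d: "c * (E1 / 2) + c * (k * Ek / 2) = (c/2) * (E1 + k * Ek)" by (simp add: algebra_simps)
  have p: "E1 + k * Ek > 0" using assms by (simp add: add_pos_nonneg)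
  have "(c * (E1 / 2)) / (c * (E1 / 2) + c * (k * Ek / 2)) = E1 / (E1 + k * Ek)"
  proof -
    have "c * (E1 / 2) = (c/2) * E1" by simp
    then show ?thesis unfolding d using assms p
      by (metis mult_divide_mult_cancel_left_if half_gt_zero less_irrefl)
  qed
  also have "\<dots> \<ge> 4/5" using assms p by (simp add: pos_le_divide_eq algebra_simps)
  finally have a: "(c * (E1 / 2)) / (c * (E1 / 2) + c * (k * Ek / 2)) \<ge> 4/5" .
  have "(1/2) / (1/2 + k/2) = 1 / (1 + k)" using assms by (simp add: field_simps)
  also have "\<dots> \<le> 1/10" using assms by (simp add: field_simps)
  finally show ?thesis using a by linarith
qed

lemma choose_k:
  assumes "\<gamma> > 0"
  shows "\<exists>k::nat. k \<ge> 9 \<and> (\<forall>m\<ge>k. real m * (exp (- \<gamma> * real m) * exp (- \<gamma> * real m))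
            \<le> (exp (- \<gamma>) * exp (- \<gamma>)) / 4)"
proof -
  have "((\<lambda>k::nat. real k * exp (-2*\<gamma>*real k)) \<longlongrightarrow> 0) at_top"
    using assms by real_asymp
  moreover have "(exp (- \<gamma>) * exp (- \<gamma>)) / 4 > 0" by simp
  ultimately have "eventually (\<lambda>k::nat. real k * exp (-2*\<gamma>*real k) < (exp (- \<gamma>) * exp (- \<gamma>)) / 4) at_top"
    by (rule order_tendstoD)
  then obtain K where K: "\<And>m. m \<ge> K \<Longrightarrow> real m * exp (-2*\<gamma>*real m) < (exp (- \<gamma>) * exp (- \<gamma>)) / 4"
    unfolding eventually_at_top_linorder by blast
  have e: "exp (- \<gamma> * real m) * exp (- \<gamma> * real m) = exp (-2*\<gamma>*real m)" for m
    by (simp add: exp_add[symmetric])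
  show ?thesis
  proof (rule exI[of _ "max K 9"], intro conjI allI impI)
    fix m assume "max K 9 \<le> m"
    then have "K \<le> m" by simp
    from K[OF this] show "real m * (exp (- \<gamma> * real m) * exp (- \<gamma> * real m))
            \<le> (exp (- \<gamma>) * exp (- \<gamma>)) / 4" unfolding e by linarith
  qed simp
qed

lemma minus_X00:
  fixes \<gamma> :: real and k :: nat
  assumes k: "k \<ge> 2"
  defines "c \<equiv> exp (2 * \<gamma>) - 1" and "E1 \<equiv> exp (- \<gamma>) * exp (- \<gamma>)"
    and "Ek \<equiv> exp (- \<gamma> * real k) * exp (- \<gamma> * real k)"
  shows "mdiff (rho_minus (dg 1 k)) (normalize_op (N_minus \<gamma> (dg 1 k))) 0 0
     = complex_of_real ((1/2) / (1/2 + real k/2) - (c * (E1 / 2)) / (c * (E1 / 2) + c * (real k * Ek / 2)))"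
proof -
  have k1: "k - 1 \<noteq> 0" "Suc (k - 1) = k" using k by auto
  have sq: "sqrt (real (Suc n)) * sqrt (real (Suc n)) = real (Suc n)" for n by simp
  have ac: "ann_conj (dg 1 k) n n = (if n = 0 then complex_of_real (1/2) else if n = k - 1
      then complex_of_real (real k / 2) else 0)" for n
    using k by (auto simp: ann_conj_def dg_def simp flip: of_real_mult)
  have tr: "mtrace (ann_conj (dg 1 k)) = complex_of_real (1/2) + complex_of_real (real k / 2)"
    by (rule mtrace_two[where X="ann_conj (dg 1 k)", OF k1(1)[symmetric] ac])
  have nm: "N_minus \<gamma> (dg 1 k) n n = (if n = 0 then complex_of_real (c * (E1 / 2)) else if n = k - 1
      then complex_of_real (c * (real k * Ek / 2)) else 0)" for n
    using k by (auto simp: N_minus_def ann_conj_def damp_def dg_def c_def E1_def Ek_def simp flip: of_real_mult;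
        simp add: algebra_simps)
  have trn: "mtrace (N_minus \<gamma> (dg 1 k)) = complex_of_real (c * (E1 / 2)) + complex_of_real (c * (real k * Ek / 2))"
    by (rule mtrace_two[where X="N_minus \<gamma> (dg 1 k)", OF k1(1)[symmetric] nm])
  show ?thesis
    unfolding mdiff_def rho_minus_def normalize_op_def tr trn ac nm
    by (simp flip: of_real_add of_real_divide of_real_diff)
qed

lemma plus_X:
  fixes \<gamma> :: real and k :: nat
  assumes k: "k \<ge> 2"
  defines "c \<equiv> exp (2 * \<gamma>) - 1" and "E1 \<equiv> exp (- \<gamma>) * exp (- \<gamma>)"
    and "Ek \<equiv> exp (- \<gamma> * real (Suc k)) * exp (- \<gamma> * real (Suc k))"
  defines "X \<equiv> mdiff (rho_plus (dg 0 k)) (normalize_op (N_plus \<gamma> (dg 0 k)))"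
  shows "X 0 0 = 0" "X 0 1 = 0" "X 1 0 = 0" 
    "X 1 1 = complex_of_real ((1/2) / (1/2 + real (Suc k)/2) - (c * (E1 / 2)) / (c * (E1 / 2) + c * (real (Suc k) * Ek / 2)))"
proof -
  have k1: "1 \<noteq> Suc k" using k by auto
  have cc: "cre_conj (dg 0 k) n n = (if n = 1 then complex_of_real (1/2) else if n = Suc k
      then complex_of_real (real (Suc k) / 2) else 0)" for n
    using k by (auto simp: cre_conj_def dg_def simp flip: of_real_mult)
  have tr: "mtrace (cre_conj (dg 0 k)) = complex_of_real (1/2) + complex_of_real (real (Suc k) / 2)"
    by (rule mtrace_two[where X="cre_conj (dg 0 k)", OF k1 cc])
  have np: "N_plus \<gamma> (dg 0 k) n n = (if n = 1 then complex_of_real (c * (E1 / 2)) else if n = Suc k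
      then complex_of_real (c * (real (Suc k) * Ek / 2)) else 0)" for n
    using k by (auto simp: N_plus_def cre_conj_def damp_def dg_def c_def E1_def Ek_def simp flip: of_real_mult;
        simp add: algebra_simps)
  have trn: "mtrace (N_plus \<gamma> (dg 0 k)) = complex_of_real (c * (E1 / 2)) + complex_of_real (c * (real (Suc k) * Ek / 2))"
    by (rule mtrace_two[where X="N_plus \<gamma> (dg 0 k)", OF k1 np])
  show "X 0 0 = 0" "X 0 1 = 0" "X 1 0 = 0"
    by (simp_all add: X_def mdiff_def rho_plus_def normalize_op_def N_plus_def cre_conj_def damp_def)
  show "X 1 1 = complex_of_real ((1/2) / (1/2 + real (Suc k)/2) - (c * (E1 / 2)) / (c * (E1 / 2) + c * (real (Suc k) * Ek / 2)))"
    unfolding X_def mdiff_def rho_plus_def normalize_op_def tr trn cc np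
    by (simp flip: of_real_add of_real_divide of_real_diff)
qed

theorem proposition1:
  fixes \<gamma> :: real
  assumes "\<gamma> > 0"
  shows "(\<exists>\<rho>. density \<rho> \<and> energy_finite \<rho> \<and> 0 < energy \<rho> \<and>
            trace_norm (mdiff (rho_minus \<rho>) (normalize_op (N_minus \<gamma> \<rho>)))
              \<ge> ereal (ln (exp 1 - 1) / 2))
       \<and> (\<exists>\<rho>. density \<rho> \<and> energy_finite \<rho> \<and>
            trace_norm (mdiff (rho_plus \<rho>) (normalize_op (N_plus \<gamma> \<rho>)))
              \<ge> ereal (ln (exp 1 - 1) / 2))"
proof -
  obtain k :: nat where k9: "k \<ge> 9" and kb: "\<And>m. m \<ge> k \<Longrightarrow>
      real m * (exp (- \<gamma> * real m) * exp (- \<gamma> * real m)) \<le> (exp (- \<gamma>) * exp (- \<gamma>)) / 4"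
    using choose_k[OF assms] by blast
  define c where "c = exp (2 * \<gamma>) - 1"
  define E1 where "E1 = exp (- \<gamma>) * exp (- \<gamma>)"
  have c: "c > 0" using assms by (simp add: c_def)
  have E1: "E1 > 0" by (simp add: E1_def)
  have k1: "1 \<noteq> k" "0 \<noteq> k" using k9 by auto
  have k2: "2 \<le> k" using k9 by simp
  have bc: "ereal (ln (exp 1 - 1) / 2) \<le> ereal (1/2)" using bound_const by simp
  have part1: "trace_norm (mdiff (rho_minus (dg 1 k)) (normalize_op (N_minus \<gamma> (dg 1 k))))
      \<ge> ereal (ln (exp 1 - 1) / 2)"
  proof -
    define Ek where "Ek = exp (- \<gamma> * real k) * exp (- \<gamma> * real k)"
    define v where "v = (1/2) / (1/2 + real k/2) - (c * (E1 / 2)) / (c * (E1 / 2) + c * (real k * Ek / 2))"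
    have X: "mdiff (rho_minus (dg 1 k)) (normalize_op (N_minus \<gamma> (dg 1 k))) 0 0 = complex_of_real v"
      unfolding v_def c_def E1_def Ek_def by (rule minus_X00) (use k9 in simp)
    have "1/2 \<le> (c * (E1 / 2)) / (c * (E1 / 2) + c * (real k * Ek / 2)) - (1/2) / (1/2 + real k/2)"
      by (rule real_ineq) (use c E1 k9 kb[of k] in \<open>auto simp: Ek_def E1_def\<close>)
    then have "1/2 \<le> - v" unfolding v_def by linarith
    then have "1/2 \<le> cmod (complex_of_real v)" by simp
    then have "ereal (1/2) \<le> ereal (cmod (mdiff (rho_minus (dg 1 k)) (normalize_op (N_minus \<gamma> (dg 1 k))) 0 0))"
      unfolding X by (simp only: ereal_less_eq(3))
    then show ?thesis using trnorm1[of "mdiff (rho_minus (dg 1 k)) (normalize_op (N_minus \<gamma> (dg 1 k)))"] bc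
      by (rule_tac order_trans[OF bc order_trans]) (assumption+)
  qed
  have part2: "trace_norm (mdiff (rho_plus (dg 0 k)) (normalize_op (N_plus \<gamma> (dg 0 k))))
      \<ge> ereal (ln (exp 1 - 1) / 2)"
  proof -
    define Ek where "Ek = exp (- \<gamma> * real (Suc k)) * exp (- \<gamma> * real (Suc k))"
    define v where "v = (1/2) / (1/2 + real (Suc k)/2) - (c * (E1 / 2)) / (c * (E1 / 2) + c * (real (Suc k) * Ek / 2))"
    note X = plus_X[of k \<gamma>, folded c_def E1_def Ek_def, OF k2]
    have X11: "mdiff (rho_plus (dg 0 k)) (normalize_op (N_plus \<gamma> (dg 0 k))) 1 1 = complex_of_real v"
      unfolding v_def by (rule X(4))
    have "1/2 \<le> (c * (E1 / 2)) / (c * (E1 / 2) + c * (real (Suc k) * Ek / 2)) - (1/2) / (1/2 + real (Suc k)/2)"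
      by (rule real_ineq) (use c E1 k9 kb[of "Suc k"] in \<open>auto simp: Ek_def E1_def\<close>)
    then have "1/2 \<le> - v" unfolding v_def by linarith
    then have "1/2 \<le> cmod (complex_of_real v)" by simp
    then have "ereal (1/2) \<le> ereal (cmod (mdiff (rho_plus (dg 0 k)) (normalize_op (N_plus \<gamma> (dg 0 k))) 1 1))"
      unfolding X11 by (simp only: ereal_less_eq(3))
    then show ?thesis using trnorm2[OF X(1-3)] bc
      by (rule_tac order_trans[OF bc order_trans]) (assumption+)
  qed
  show ?thesis
    using part1 part2 dg_density[OF k1(1)] dg_density[OF k1(2)] dg_energy[OF k1(1)] dg_energy[OF k1(2)]
    by auto
qed

end
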